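(* Let $n\ge 1$, let $L>0$ and let $D\subseteq\mathbb{R}$ be compact. Let $T$ be an input-dependent CPTP map on $n$ qubits, i.e. for each $x\in D\cap[-L,L]$, $T(x)$ is a completely positive trace-preserving linear map on the space of $2^n\times 2^n$ complex matrices. Suppose there is $\epsilon$ with $0<\epsilon\le 1$ such that for all $x\in D\cap[-L,L]$, $$\|T(x)|_{H_0(2^n)}\|_{2-2}:=\sup_{A\in H_0(2^n),\,A\neq 0}\frac{\|T(x)A\|_2}{\|A\|_2}\le 1-\epsilon,$$ where $H_0(2^n)$ is the real vector space of $2^n\times 2^n$ traceless Hermitian matrices. Then $T$ is convergent with respect to $K_L(D)$: there exists a sequence $\{\delta_k\}_{k>0}$ with $\lim_{k\to\infty}\delta_k=0$ such that for every input sequence $u=\{u_k\}_{k\ge 1}$ with $u_k\in D\cap[-L,L]$ for all $k$, and any two sequences of density operators $\{\rho_{j,k}\}_{k\ge 0}$ ($j=1,2$) satisfying $\rho_{j,k}=T(u_k)\rho_{j,k-1}$ for $k\ge 1$, one has $\|\rho_{1,k}-\rho_{2,k}\|_2\le\delta_k$ for all $k>0$. Moreover, any pair of initial density operators converge uniformly to one another under $T$ (i.e. the sequence $\delta_k$ can be chosen independent of the initial density operators and of the input sequence).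
   Context: $\|\cdot\|_2$ denotes the Schatten 2-norm (Hilbert–Schmidt norm) $\|A\|_2=\sqrt{{\rm Tr}(A^*A)}$. A density operator is a positive semidefinite $2^n\times 2^n$ matrix of unit trace. $K_L(D)$ denotes the set of real sequences $u=\{u_k\}_{k\in\mathbb{Z}}$ with $u_k\in D\cap[-L,L]$ for all $k$. *)

theory Defs
  imports "HOL-Analysis.Analysis" "Jordan_Normal_Form.Matrix"
begin

definition ctrans :: "complex mat \<Rightarrow> complex mat" where
  "ctrans A = mat (dim_col A) (dim_row A) (\<lambda>(i,j). cnj (A $$ (j,i)))"

definition mtrace :: "complex mat \<Rightarrow> complex" where
  "mtrace A = (\<Sum>i<dim_row A. A $$ (i,i))"

definition hs_norm :: "complex mat \<Rightarrow> real" where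
  "hs_norm A = sqrt (Re (mtrace (ctrans A * A)))"

definition hermitian :: "nat \<Rightarrow> complex mat \<Rightarrow> bool" where
  "hermitian d A \<longleftrightarrow> A \<in> carrier_mat d d \<and> ctrans A = A"

definition psd :: "nat \<Rightarrow> complex mat \<Rightarrow> bool" where
  "psd d A \<longleftrightarrow> hermitian d A \<and>
     (\<forall>v \<in> carrier_vec d. Im (conjugate v \<bullet> (A *\<^sub>v v)) = 0 \<and> Re (conjugate v \<bullet> (A *\<^sub>v v)) \<ge> 0)"

definition density :: "nat \<Rightarrow> complex mat \<Rightarrow> bool" where
  "density d \<rho> \<longleftrightarrow> psd d \<rho> \<and> mtrace \<rho> = 1"

definition H0 :: "nat \<Rightarrow> complex mat set" where
  "H0 d = {A. hermitian d A \<and> mtrace A = 0}"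

definition lin_map :: "nat \<Rightarrow> (complex mat \<Rightarrow> complex mat) \<Rightarrow> bool" where
  "lin_map d T \<longleftrightarrow>
     (\<forall>A \<in> carrier_mat d d. T A \<in> carrier_mat d d) \<and>
     (\<forall>A \<in> carrier_mat d d. \<forall>B \<in> carrier_mat d d. T (A + B) = T A + T B) \<and>
     (\<forall>A \<in> carrier_mat d d. \<forall>c. T (c \<cdot>\<^sub>m A) = c \<cdot>\<^sub>m T A)"

(* id_m \<otimes> T applied to an (m*d) x (m*d) matrix viewed as an m x m array of d x d blocks *)
definition ampl :: "nat \<Rightarrow> nat \<Rightarrow> (complex mat \<Rightarrow> complex mat) \<Rightarrow> complex mat \<Rightarrow> complex mat" where
  "ampl m d T M = mat (m*d) (m*d) (\<lambda>(p,q).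
      T (mat d d (\<lambda>(a,b). M $$ ((p div d)*d + a, (q div d)*d + b))) $$ (p mod d, q mod d))"

definition completely_positive :: "nat \<Rightarrow> (complex mat \<Rightarrow> complex mat) \<Rightarrow> bool" where
  "completely_positive d T \<longleftrightarrow> (\<forall>m \<ge> 1. \<forall>M. psd (m*d) M \<longrightarrow> psd (m*d) (ampl m d T M))"

definition trace_preserving :: "nat \<Rightarrow> (complex mat \<Rightarrow> complex mat) \<Rightarrow> bool" where
  "trace_preserving d T \<longleftrightarrow> (\<forall>A \<in> carrier_mat d d. mtrace (T A) = mtrace A)"

definition CPTP :: "nat \<Rightarrow> (complex mat \<Rightarrow> complex mat) \<Rightarrow> bool" where
  "CPTP d T \<longleftrightarrow> lin_map d T \<and> completely_positive d T \<and> trace_preserving d T"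

definition norm22_H0 :: "nat \<Rightarrow> (complex mat \<Rightarrow> complex mat) \<Rightarrow> real" where
  "norm22_H0 d T = Sup {hs_norm (T A) / hs_norm A | A. A \<in> H0 d \<and> A \<noteq> 0\<^sub>m d d}"

end

theory Submission
  imports Defs
begin

lemma hs_norm_L2:
  assumes "A \<in> carrier_mat r c"
  shows "hs_norm A = L2_set (\<lambda>(i,j). cmod (A $$ (i,j))) ({..<r} \<times> {..<c})"
proof -
  have dims: "dim_row A = r" "dim_col A = c" using assms by auto
  have e: "(ctrans A * A) $$ (j,j) = (\<Sum>i<r. complex_of_real ((cmod (A $$ (i,j)))\<^sup>2))" if "j < c" for j
  proof -
    have "(ctrans A * A) $$ (j,j) = row (ctrans A) j \<bullet> col A j"
      using that dims by (simp add: ctrans_def)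
    also have "\<dots> = (\<Sum>i<r. cnj (A $$ (i,j)) * A $$ (i,j))"
      using that dims unfolding scalar_prod_def by (simp add: ctrans_def atLeast0LessThan)
    also have "\<dots> = (\<Sum>i<r. complex_of_real ((cmod (A $$ (i,j)))\<^sup>2))"
      by (intro sum.cong refl) (metis complex_norm_square mult.commute)
    finally show ?thesis .
  qed
  have "mtrace (ctrans A * A) = (\<Sum>j<c. \<Sum>i<r. complex_of_real ((cmod (A $$ (i,j)))\<^sup>2))"
    unfolding mtrace_def using dims e by (simp add: ctrans_def)
  hence "Re (mtrace (ctrans A * A)) = (\<Sum>j<c. \<Sum>i<r. (cmod (A $$ (i,j)))\<^sup>2)"
    by simp
  also have "\<dots> = (\<Sum>(i,j)\<in>{..<r} \<times> {..<c}. (cmod (A $$ (i,j)))\<^sup>2)"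
    by (subst sum.swap) (simp add: sum.cartesian_product)
  finally show ?thesis unfolding hs_norm_def L2_set_def
    by (simp add: case_prod_unfold)
qed

lemma hs_norm_nonneg: "hs_norm A \<ge> 0"
proof -
  have "A \<in> carrier_mat (dim_row A) (dim_col A)" by (rule carrier_matI) auto
  from hs_norm_L2[OF this] show ?thesis by (simp only: L2_set_nonneg)
qed

lemma hs_norm_add:
  assumes "A \<in> carrier_mat r c" "B \<in> carrier_mat r c"
  shows "hs_norm (A + B) \<le> hs_norm A + hs_norm B"
proof -
  have AB: "A + B \<in> carrier_mat r c" using assms by simp
  have "hs_norm (A + B) = L2_set (\<lambda>(i,j). cmod ((A+B) $$ (i,j))) ({..<r} \<times> {..<c})"
    using hs_norm_L2[OF AB] .
  also have "\<dots> \<le> L2_set (\<lambda>x. (\<lambda>(i,j). cmod (A $$ (i,j))) x + (\<lambda>(i,j). cmod (B $$ (i,j))) x) ({..<r} \<times> {..<c})"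
    by (rule L2_set_mono) (use assms in \<open>auto simp: norm_triangle_ineq\<close>)
  also have "\<dots> \<le> hs_norm A + hs_norm B"
    unfolding hs_norm_L2[OF assms(1)] hs_norm_L2[OF assms(2)] by (rule L2_set_triangle_ineq)
  finally show ?thesis .
qed

lemma hs_norm_smult:
  assumes "A \<in> carrier_mat r c"
  shows "hs_norm (a \<cdot>\<^sub>m A) = cmod a * hs_norm A"
proof -
  have aA: "a \<cdot>\<^sub>m A \<in> carrier_mat r c" using assms by simp
  show ?thesis
    unfolding hs_norm_L2[OF aA] hs_norm_L2[OF assms]
    by (subst L2_set_right_distrib) (use assms in \<open>auto intro!: L2_set_cong simp: norm_mult\<close>)
qed

lemma hs_norm_entry:
  assumes "A \<in> carrier_mat r c" "i < r" "j < c"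
  shows "cmod (A $$ (i,j)) \<le> hs_norm A"
  unfolding hs_norm_L2[OF assms(1)]
  using member_le_L2_set[of "{..<r} \<times> {..<c}" "(i,j)" "\<lambda>(i,j). cmod (A $$ (i,j))"] assms by auto

lemma hs_norm_zero:
  assumes "A \<in> carrier_mat r c" "hs_norm A = 0"
  shows "A = 0\<^sub>m r c"
proof (rule eq_matI)
  fix i j assume "i < dim_row (0\<^sub>m r c)" "j < dim_col (0\<^sub>m r c)"
  then show "A $$ (i,j) = 0\<^sub>m r c $$ (i,j)"
    using hs_norm_entry[OF assms(1), of i j] assms by auto
qed (use assms in auto)

lemma hs_norm_bound:
  assumes "A \<in> carrier_mat r c" "\<And>i j. i < r \<Longrightarrow> j < c \<Longrightarrow> cmod (A $$ (i,j)) \<le> M" "M \<ge> 0"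
  shows "hs_norm A \<le> sqrt (real (r * c)) * M"
proof -
  have "hs_norm A \<le> L2_set (\<lambda>x. M) ({..<r} \<times> {..<c})"
    unfolding hs_norm_L2[OF assms(1)] by (rule L2_set_mono) (use assms in auto)
  also have "\<dots> = sqrt (real (r * c)) * \<bar>M\<bar>" by (simp add: L2_set_constant)
  finally show ?thesis using assms(3) by simp
qed

lemma lin_smult: "lin_map d T \<Longrightarrow> A \<in> carrier_mat d d \<Longrightarrow> T (c \<cdot>\<^sub>m A) = c \<cdot>\<^sub>m T A"
  unfolding lin_map_def by blast
lemma lin_add: "lin_map d T \<Longrightarrow> A \<in> carrier_mat d d \<Longrightarrow> B \<in> carrier_mat d d \<Longrightarrow> T (A + B) = T A + T B"
  unfolding lin_map_def by blast
lemma lin_carrier: "lin_map d T \<Longrightarrow> A \<in> carrier_mat d d \<Longrightarrow> T A \<in> carrier_mat d d"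
  unfolding lin_map_def by blast

lemma lin_zero:
  assumes "lin_map d T"
  shows "T (0\<^sub>m d d) = 0\<^sub>m d d"
proof -
  have "T (0\<^sub>m d d) = T (0 \<cdot>\<^sub>m 0\<^sub>m d d)" by simp
  also have "\<dots> = 0 \<cdot>\<^sub>m T (0\<^sub>m d d)" using lin_smult[OF assms, of "0\<^sub>m d d" 0] by simp
  also have "\<dots> = 0\<^sub>m d d" using lin_carrier[OF assms zero_carrier_mat]
    by (intro eq_matI) auto
  finally show ?thesis .
qed

lemma lin_minus:
  assumes "lin_map d T" "A \<in> carrier_mat d d" "B \<in> carrier_mat d d"
  shows "T (A - B) = T A - T B"
proof -
  have TB: "T B \<in> carrier_mat d d" "T A \<in> carrier_mat d d" using assms unfolding lin_map_def by auto
  have "A - B = A + (-1) \<cdot>\<^sub>m B" using assms by (intro eq_matI) auto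
  hence "T (A - B) = T A + (-1) \<cdot>\<^sub>m T B"
    using lin_add[OF assms(1) assms(2), of "(-1) \<cdot>\<^sub>m B"] lin_smult[OF assms(1) assms(3)] assms(3) by simp
  also have "\<dots> = T A - T B" using TB by (intro eq_matI) auto
  finally show ?thesis .
qed

lemma hs_norm_zero_mat: "hs_norm (0\<^sub>m r c) = 0"
proof -
  have "hs_norm (0 \<cdot>\<^sub>m 0\<^sub>m r c) = 0" using hs_norm_smult[of "0\<^sub>m r c" r c 0] by simp
  moreover have "0 \<cdot>\<^sub>m 0\<^sub>m r c = (0\<^sub>m r c :: complex mat)" by (intro eq_matI) auto
  ultimately show ?thesis by simp
qed

definition Emat :: "nat \<Rightarrow> nat \<times> nat \<Rightarrow> complex mat" where
  "Emat d x = mat d d (\<lambda>p. if p = x then 1 else 0)"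

definition Pmat :: "nat \<Rightarrow> (nat \<times> nat) set \<Rightarrow> complex mat \<Rightarrow> complex mat" where
  "Pmat d S A = mat d d (\<lambda>p. if p \<in> S then A $$ p else 0)"

lemma Emat_carrier[simp]: "Emat d x \<in> carrier_mat d d" unfolding Emat_def by simp
lemma Pmat_carrier[simp]: "Pmat d S A \<in> carrier_mat d d" unfolding Pmat_def by simp

lemma partial_bound:
  assumes lin: "lin_map d T" and fin: "finite S"
  shows "hs_norm (T (Pmat d S A)) \<le> (\<Sum>x\<in>S. cmod (A $$ x) * hs_norm (T (Emat d x)))"
  using fin
proof (induction S rule: finite_induct)
  case empty
  have "Pmat d {} A = 0\<^sub>m d d" unfolding Pmat_def by (intro eq_matI) auto
  then show ?case using lin_zero[OF lin] hs_norm_zero_mat by simp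
next
  case (insert x F)
  have eq: "Pmat d (insert x F) A = Pmat d F A + (A $$ x) \<cdot>\<^sub>m Emat d x"
    using insert(2) unfolding Pmat_def Emat_def by (intro eq_matI) auto
  have "T (Pmat d (insert x F) A) = T (Pmat d F A) + (A $$ x) \<cdot>\<^sub>m T (Emat d x)"
    unfolding eq by (simp add: lin_add[OF lin] lin_smult[OF lin])
  hence "hs_norm (T (Pmat d (insert x F) A)) \<le> hs_norm (T (Pmat d F A)) + hs_norm ((A $$ x) \<cdot>\<^sub>m T (Emat d x))"
    using hs_norm_add[of "T (Pmat d F A)" d d "(A $$ x) \<cdot>\<^sub>m T (Emat d x)"]
      lin_carrier[OF lin, of "Pmat d F A"] lin_carrier[OF lin, of "Emat d x"] by simp
  also have "hs_norm ((A $$ x) \<cdot>\<^sub>m T (Emat d x)) = cmod (A $$ x) * hs_norm (T (Emat d x))"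
    using hs_norm_smult lin_carrier[OF lin, of "Emat d x"] by simp
  finally show ?case using insert by simp
qed

lemma lin_bounded:
  assumes lin: "lin_map d T"
  shows "\<exists>K. \<forall>A\<in>carrier_mat d d. hs_norm (T A) \<le> K * hs_norm A"
proof -
  define K where "K = (\<Sum>x\<in>{..<d}\<times>{..<d}. hs_norm (T (Emat d x)))"
  have "hs_norm (T A) \<le> K * hs_norm A" if A: "A \<in> carrier_mat d d" for A
  proof -
    have "Pmat d ({..<d}\<times>{..<d}) A = A" using A unfolding Pmat_def by (intro eq_matI) auto
    hence "hs_norm (T A) \<le> (\<Sum>x\<in>{..<d}\<times>{..<d}. cmod (A $$ x) * hs_norm (T (Emat d x)))"
      using partial_bound[OF lin, of "{..<d}\<times>{..<d}" A] by simp
    also have "\<dots> \<le> (\<Sum>x\<in>{..<d}\<times>{..<d}. hs_norm A * hs_norm (T (Emat d x)))"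
      by (intro sum_mono mult_right_mono) (use hs_norm_entry[OF A] hs_norm_nonneg in auto)
    also have "\<dots> = K * hs_norm A" unfolding K_def by (simp add: sum_distrib_left mult.commute)
    finally show ?thesis .
  qed
  thus ?thesis by blast
qed

lemma contract:
  assumes cp: "CPTP d T" and nb: "norm22_H0 d T \<le> c" and AH: "A \<in> H0 d"
  shows "hs_norm (T A) \<le> c * hs_norm A"
proof -
  have lin: "lin_map d T" using cp unfolding CPTP_def by simp
  have A: "A \<in> carrier_mat d d" using AH unfolding H0_def hermitian_def by simp
  show ?thesis
  proof (cases "A = 0\<^sub>m d d")
    case True
    then show ?thesis using lin_zero[OF lin] hs_norm_zero_mat by simp
  next
    case False
    have pos: "hs_norm A > 0"
      using hs_norm_zero[OF A] hs_norm_nonneg[of A] False by force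
    obtain K where K: "\<forall>B\<in>carrier_mat d d. hs_norm (T B) \<le> K * hs_norm B"
      using lin_bounded[OF lin] by blast
    let ?S = "{hs_norm (T B) / hs_norm B | B. B \<in> H0 d \<and> B \<noteq> 0\<^sub>m d d}"
    have bdd: "bdd_above ?S"
    proof (rule bdd_aboveI)
      fix x assume "x \<in> ?S"
      then obtain B where B: "x = hs_norm (T B) / hs_norm B" "B \<in> H0 d" by blast
      have Bc: "B \<in> carrier_mat d d" using B(2) unfolding H0_def hermitian_def by simp
      show "x \<le> max K 0"
      proof (cases "hs_norm B = 0")
        case True then show ?thesis using B by simp
      next
        case False
        hence "hs_norm B > 0" using hs_norm_nonneg[of B] by simp
        then show ?thesis using B K Bc by (simp add: divide_le_eq) (smt (verit) mult_right_mono)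
      qed
    qed
    have "hs_norm (T A) / hs_norm A \<in> ?S" using AH False by blast
    hence "hs_norm (T A) / hs_norm A \<le> Sup ?S" using bdd by (rule cSup_upper)
    also have "\<dots> \<le> c" using nb unfolding norm22_H0_def by simp
    finally show ?thesis using pos by (simp add: divide_le_eq)
  qed
qed

lemma sum_two:
  assumes "finite S" "i \<in> S" "j \<in> S" "i \<noteq> j"
  shows "(\<Sum>q\<in>S. f q * (if q = i then a else if q = j then b else 0)) = f i * a + f j * (b::complex)"
proof -
  have "(\<Sum>q\<in>S. f q * (if q = i then a else if q = j then b else 0))
      = (\<Sum>q\<in>S. (if q = i then f i * a else 0) + (if q = j then f j * b else 0))"
    using assms(4) by (intro sum.cong) auto
  also have "\<dots> = f i * a + f j * b" using assms by (simp add: sum.distrib)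
  finally show ?thesis .
qed

lemma quad:
  assumes rho: "\<rho> \<in> carrier_mat d d" and ij: "i < d" "j < d" "i \<noteq> j"
    and v: "v = vec d (\<lambda>p. if p = i then a else if p = j then b else 0)"
  shows "conjugate v \<bullet> (\<rho> *\<^sub>v v) = cnj a * (\<rho>$$(i,i)*a + \<rho>$$(i,j)*b) + cnj b * (\<rho>$$(j,i)*a + \<rho>$$(j,j)*b)"
proof -
  have w: "(\<rho> *\<^sub>v v) $ p = \<rho>$$(p,i)*a + \<rho>$$(p,j)*b" if "p < d" for p
  proof -
    have "(\<rho> *\<^sub>v v) $ p = (\<Sum>q\<in>{0..<d}. \<rho>$$(p,q) * (if q = i then a else if q = j then b else 0))"
      using rho that v by (auto simp: scalar_prod_def intro!: sum.cong)
    also have "\<dots> = \<rho>$$(p,i)*a + \<rho>$$(p,j)*b" using ij by (intro sum_two) auto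
    finally show ?thesis .
  qed
  have "conjugate v \<bullet> (\<rho> *\<^sub>v v) = (\<Sum>p\<in>{0..<d}. (\<rho> *\<^sub>v v) $ p * (if p = i then cnj a else if p = j then cnj b else 0))"
    unfolding scalar_prod_def using rho v by (intro sum.cong) (auto simp: mult.commute)
  also have "\<dots> = (\<rho> *\<^sub>v v) $ i * cnj a + (\<rho> *\<^sub>v v) $ j * cnj b" using ij by (intro sum_two) auto
  finally show ?thesis using w ij by (simp add: mult.commute)
qed

lemma density_entry:
  assumes dens: "density d \<rho>" and d2: "2 \<le> d" and ij: "i < d" "j < d"
  shows "cmod (\<rho> $$ (i,j)) \<le> 1"
proof -
  have rho: "\<rho> \<in> carrier_mat d d" and herm: "ctrans \<rho> = \<rho>"
    and pos: "\<And>v. v \<in> carrier_vec d \<Longrightarrow> Re (conjugate v \<bullet> (\<rho> *\<^sub>v v)) \<ge> 0"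
    and tr: "mtrace \<rho> = 1"
    using dens unfolding density_def psd_def hermitian_def by auto
  have hent: "\<rho> $$ (q,p) = cnj (\<rho> $$ (p,q))" if "p < d" "q < d" for p q
  proof -
    have "\<rho> $$ (q,p) = ctrans \<rho> $$ (q,p)" using herm by simp
    also have "\<dots> = cnj (\<rho> $$ (p,q))" using rho that unfolding ctrans_def by simp
    finally show ?thesis .
  qed
  have diag_pos: "Re (\<rho> $$ (p,p)) \<ge> 0" if p: "p < d" for p
  proof -
    define q where "q = (if p = 0 then 1 else (0::nat))"
    have q: "q < d" "p \<noteq> q" using d2 p unfolding q_def by auto
    define v where "v = vec d (\<lambda>k. if k = p then (1::complex) else if k = q then 0 else 0)"
    have "conjugate v \<bullet> (\<rho> *\<^sub>v v) = \<rho> $$ (p,p)"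
      using quad[OF rho p q(1) q(2) v_def] by simp
    moreover have "v \<in> carrier_vec d" unfolding v_def by simp
    ultimately show ?thesis using pos[of v] by simp
  qed
  have diag_real: "Im (\<rho> $$ (p,p)) = 0" if "p < d" for p
    using hent[OF that that] by (simp add: complex_eq_iff)
  have sumRe: "(\<Sum>p<d. Re (\<rho> $$ (p,p))) = 1"
  proof -
    have "Re (\<Sum>p<d. \<rho> $$ (p,p)) = 1" using tr rho unfolding mtrace_def by simp
    thus ?thesis by (simp add: Re_sum)
  qed
  have diag_le: "Re (\<rho> $$ (p,p)) \<le> 1" if p: "p < d" for p
  proof -
    have "Re (\<rho> $$ (p,p)) \<le> (\<Sum>p<d. Re (\<rho> $$ (p,p)))"
      by (rule member_le_sum) (use p diag_pos in auto)
    thus ?thesis using sumRe by simp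
  qed
  show ?thesis
  proof (cases "i = j")
    case True
    have "cmod (\<rho> $$ (i,i)) = \<bar>Re (\<rho> $$ (i,i))\<bar>"
      using diag_real[OF ij(1)] by (simp add: cmod_def)
    then show ?thesis using True diag_pos[OF ij(1)] diag_le[OF ij(1)] by simp
  next
    case False
    show ?thesis
    proof (cases "\<rho> $$ (i,j) = 0")
      case True then show ?thesis by simp
    next
      case nz: False
      define z where "z = \<rho> $$ (i,j)"
      define r where "r = cmod z"
      have r0: "r > 0" using nz unfolding r_def z_def by simp
      define w where "w = cnj z / complex_of_real r"
      have zz: "z * cnj z = complex_of_real (r^2)" unfolding r_def by (rule complex_norm_square[symmetric])
      have e1: "z * w = complex_of_real r"
        using r0 zz unfolding w_def by (simp add: field_simps power2_eq_square)
      have e2: "cnj w * cnj z = complex_of_real r"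
      proof -
        have "cnj (z * w) = cnj w * cnj z" by (simp add: mult.commute)
        thus ?thesis using e1 by simp
      qed
      have e3: "cnj w * w = 1"
        using r0 zz unfolding w_def by (simp add: field_simps power2_eq_square mult.commute)
      define v where "v = vec d (\<lambda>k. if k = i then (1::complex) else if k = j then - w else 0)"
      have "conjugate v \<bullet> (\<rho> *\<^sub>v v) = \<rho>$$(i,i) - z * w - cnj w * cnj z + cnj w * w * \<rho>$$(j,j)"
        using quad[OF rho ij False v_def] hent[OF ij] unfolding z_def by (simp add: algebra_simps)
      also have "\<dots> = \<rho>$$(i,i) + \<rho>$$(j,j) - 2 * complex_of_real r"
        using e1 e2 e3 by simp
      finally have "Re (conjugate v \<bullet> (\<rho> *\<^sub>v v)) = Re (\<rho>$$(i,i)) + Re (\<rho>$$(j,j)) - 2 * r"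
        by simp
      moreover have "v \<in> carrier_vec d" unfolding v_def by simp
      ultimately have "Re (\<rho>$$(i,i)) + Re (\<rho>$$(j,j)) - 2 * r \<ge> 0" using pos[of v] by simp
      then show ?thesis using diag_le[OF ij(1)] diag_le[OF ij(2)] unfolding r_def z_def by simp
    qed
  qed
qed

lemma diff_H0:
  assumes "density d A" "density d B"
  shows "A - B \<in> H0 d"
proof -
  have A: "A \<in> carrier_mat d d" "ctrans A = A" "mtrace A = 1"
    and B: "B \<in> carrier_mat d d" "ctrans B = B" "mtrace B = 1"
    using assms unfolding density_def psd_def hermitian_def by auto
  have hA: "cnj (A$$(j,i)) = A$$(i,j)" if "i<d" "j<d" for i j
    using arg_cong[OF A(2), of "\<lambda>M. M $$ (i,j)"] A(1) that by (simp add: ctrans_def)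
  have hB: "cnj (B$$(j,i)) = B$$(i,j)" if "i<d" "j<d" for i j
    using arg_cong[OF B(2), of "\<lambda>M. M $$ (i,j)"] B(1) that by (simp add: ctrans_def)
  have h: "ctrans (A - B) = A - B"
    unfolding ctrans_def using A(1) B(1) hA hB by (intro eq_matI) auto
  have "mtrace (A - B) = mtrace A - mtrace B"
    using A B unfolding mtrace_def by (simp add: sum_subtractf)
  thus ?thesis using h A B minus_carrier_mat[OF B(1), of A] unfolding H0_def hermitian_def by simp
qed

theorem theorem1:
  fixes n :: nat and L \<epsilon> :: real and D :: "real set"
    and T :: "real \<Rightarrow> complex mat \<Rightarrow> complex mat"
  assumes "n \<ge> 1" and "L > 0" and "compact D"
    and "\<And>x. x \<in> D \<inter> {-L..L} \<Longrightarrow> CPTP (2^n) (T x)"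
    and "0 < \<epsilon>" and "\<epsilon> \<le> 1"
    and "\<And>x. x \<in> D \<inter> {-L..L} \<Longrightarrow> norm22_H0 (2^n) (T x) \<le> 1 - \<epsilon>"
  shows "\<exists>\<delta> :: nat \<Rightarrow> real. \<delta> \<longlonglongrightarrow> 0 \<and>
    (\<forall>(u :: nat \<Rightarrow> real) (\<rho>1 :: nat \<Rightarrow> complex mat) (\<rho>2 :: nat \<Rightarrow> complex mat).
       (\<forall>k \<ge> 1. u k \<in> D \<inter> {-L..L}) \<and>
       (\<forall>k. density (2^n) (\<rho>1 k) \<and> density (2^n) (\<rho>2 k)) \<and>
       (\<forall>k \<ge> 1. \<rho>1 k = T (u k) (\<rho>1 (k - 1)) \<and> \<rho>2 k = T (u k) (\<rho>2 (k - 1)))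
       \<longrightarrow> (\<forall>k > 0. hs_norm (\<rho>1 k - \<rho>2 k) \<le> \<delta> k))"
proof -
  define d :: nat where "d = 2^n"
  have d2: "2 \<le> d" unfolding d_def using assms(1)
    by (metis power_increasing power_one_right zero_less_numeral one_le_numeral)
  define \<delta> :: "nat \<Rightarrow> real" where "\<delta> k = (1 - \<epsilon>)^k * (sqrt (real (d * d)) * 2)" for k
  have lim: "\<delta> \<longlonglongrightarrow> 0"
    unfolding \<delta>_def by (intro tendsto_mult_left_zero LIMSEQ_realpow_zero) (use assms in auto)
  have main: "hs_norm (\<rho>1 k - \<rho>2 k) \<le> \<delta> k"
    if u: "\<forall>k \<ge> 1. u k \<in> D \<inter> {-L..L}"
      and dens: "\<forall>k. density (2^n) (\<rho>1 k) \<and> density (2^n) (\<rho>2 k)"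
      and rec: "\<forall>k \<ge> 1. \<rho>1 k = T (u k) (\<rho>1 (k - 1)) \<and> \<rho>2 k = T (u k) (\<rho>2 (k - 1))"
    for u \<rho>1 \<rho>2 k
  proof (induction k)
    case 0
    have c: "\<rho>1 0 \<in> carrier_mat d d" "\<rho>2 0 \<in> carrier_mat d d"
      using dens unfolding d_def density_def psd_def hermitian_def by auto
    have "hs_norm (\<rho>1 0 - \<rho>2 0) \<le> sqrt (real (d * d)) * 2"
    proof (rule hs_norm_bound)
      show "\<rho>1 0 - \<rho>2 0 \<in> carrier_mat d d" using c by (auto intro: minus_carrier_mat)
      fix i j assume ij: "i < d" "j < d"
      have "cmod ((\<rho>1 0 - \<rho>2 0) $$ (i,j)) = cmod (\<rho>1 0 $$ (i,j) - \<rho>2 0 $$ (i,j))" using c ij by simp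
      also have "\<dots> \<le> cmod (\<rho>1 0 $$ (i,j)) + cmod (\<rho>2 0 $$ (i,j))" by (rule norm_triangle_ineq4)
      also have "\<dots> \<le> 2" using density_entry[OF _ d2 ij, of "\<rho>1 0"] density_entry[OF _ d2 ij, of "\<rho>2 0"] dens
        unfolding d_def by fastforce
      finally show "cmod ((\<rho>1 0 - \<rho>2 0) $$ (i,j)) \<le> 2" .
    qed simp
    then show ?case unfolding \<delta>_def by simp
  next
    case (Suc k)
    have ux: "u (Suc k) \<in> D \<inter> {-L..L}" using u by simp
    have cp: "CPTP d (T (u (Suc k)))" using assms(4)[OF ux] unfolding d_def .
    have lin: "lin_map d (T (u (Suc k)))" using cp unfolding CPTP_def by simp
    have c: "\<rho>1 k \<in> carrier_mat d d" "\<rho>2 k \<in> carrier_mat d d"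
      using dens unfolding d_def density_def psd_def hermitian_def by auto
    have "\<rho>1 (Suc k) - \<rho>2 (Suc k) = T (u (Suc k)) (\<rho>1 k) - T (u (Suc k)) (\<rho>2 k)"
      using rec by simp
    also have "\<dots> = T (u (Suc k)) (\<rho>1 k - \<rho>2 k)" using lin_minus[OF lin c] by simp
    finally have eq: "\<rho>1 (Suc k) - \<rho>2 (Suc k) = T (u (Suc k)) (\<rho>1 k - \<rho>2 k)" .
    have H: "\<rho>1 k - \<rho>2 k \<in> H0 d" using diff_H0 dens unfolding d_def by blast
    have "hs_norm (\<rho>1 (Suc k) - \<rho>2 (Suc k)) \<le> (1 - \<epsilon>) * hs_norm (\<rho>1 k - \<rho>2 k)"
      unfolding eq by (rule contract[OF cp _ H]) (use assms(7)[OF ux] in \<open>simp add: d_def\<close>)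
    also have "\<dots> \<le> (1 - \<epsilon>) * \<delta> k" using Suc assms(6) by (intro mult_left_mono) auto
    finally show ?case unfolding \<delta>_def by (simp add: mult.assoc)
  qed
  show ?thesis using lim main by blast
qed

end
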